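(* Let $A$ be a commutative quasi-ring and $I$ an ideal of $A$. Then congruence modulo $I$ is compatible with the addition and the multiplication of $A$, so that the quotient $A/I$ is a quasi-ring. Moreover, if $I\neq A$, then $A/I$ is not trivial, i.e. $1\not\equiv 0 \pmod I$.
   Context: A semiring is a set with two operations $+,\cdot$ such that $(A,+)$ is a commutative monoid with neutral element $0$, $(A,\cdot)$ is a monoid with unit $1$, multiplication distributes over addition, and $0$ is absorbing. A quasi-ring is a semiring whose unit $1$ is quasi-invertible for addition (there is $y$ with $1+y+1=1$, $y+1+y=y$). An ideal of a commutative quasi-ring $A$ is a subset $I$ containing $0$, stable under addition and under multiplication by elements of $A$. Congruence modulo $I$: for $a,b\in A$, $a\equiv b \pmod I$ if and only if $(a+I)\cap(b+I)\neq\emptyset$ and, for every $c\in I$ and every $r\in A$, one has $ac+r\in I \iff bc+r\in I$. $A/I$ denotes the set of congruence classes. *)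

theory Defs
  imports Main
begin

text \<open>Algebraic structures are given by a carrier set with explicit operations
  (no requirement that 0 and 1 differ).\<close>

definition semiring :: "'a set \<Rightarrow> ('a \<Rightarrow> 'a \<Rightarrow> 'a) \<Rightarrow> ('a \<Rightarrow> 'a \<Rightarrow> 'a) \<Rightarrow> 'a \<Rightarrow> 'a \<Rightarrow> bool" where
  "semiring A add mul zero one \<longleftrightarrow>
     zero \<in> A \<and> one \<in> A \<and>
     (\<forall>a\<in>A. \<forall>b\<in>A. add a b \<in> A) \<and>
     (\<forall>a\<in>A. \<forall>b\<in>A. mul a b \<in> A) \<and>
     (\<forall>a\<in>A. \<forall>b\<in>A. \<forall>c\<in>A. add (add a b) c = add a (add b c)) \<and>
     (\<forall>a\<in>A. \<forall>b\<in>A. add a b = add b a) \<and>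
     (\<forall>a\<in>A. add zero a = a) \<and>
     (\<forall>a\<in>A. \<forall>b\<in>A. \<forall>c\<in>A. mul (mul a b) c = mul a (mul b c)) \<and>
     (\<forall>a\<in>A. mul one a = a \<and> mul a one = a) \<and>
     (\<forall>a\<in>A. \<forall>b\<in>A. \<forall>c\<in>A. mul a (add b c) = add (mul a b) (mul a c)) \<and>
     (\<forall>a\<in>A. \<forall>b\<in>A. \<forall>c\<in>A. mul (add a b) c = add (mul a c) (mul b c)) \<and>
     (\<forall>a\<in>A. mul zero a = zero \<and> mul a zero = zero)"

definition quasi_ring :: "'a set \<Rightarrow> ('a \<Rightarrow> 'a \<Rightarrow> 'a) \<Rightarrow> ('a \<Rightarrow> 'a \<Rightarrow> 'a) \<Rightarrow> 'a \<Rightarrow> 'a \<Rightarrow> bool" where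
  "quasi_ring A add mul zero one \<longleftrightarrow>
     semiring A add mul zero one \<and>
     (\<exists>y\<in>A. add (add one y) one = one \<and> add (add y one) y = y)"

definition comm_quasi_ring :: "'a set \<Rightarrow> ('a \<Rightarrow> 'a \<Rightarrow> 'a) \<Rightarrow> ('a \<Rightarrow> 'a \<Rightarrow> 'a) \<Rightarrow> 'a \<Rightarrow> 'a \<Rightarrow> bool" where
  "comm_quasi_ring A add mul zero one \<longleftrightarrow>
     quasi_ring A add mul zero one \<and> (\<forall>a\<in>A. \<forall>b\<in>A. mul a b = mul b a)"

definition qr_ideal :: "'a set \<Rightarrow> ('a \<Rightarrow> 'a \<Rightarrow> 'a) \<Rightarrow> ('a \<Rightarrow> 'a \<Rightarrow> 'a) \<Rightarrow> 'a \<Rightarrow> 'a set \<Rightarrow> bool" where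
  "qr_ideal A add mul zero I \<longleftrightarrow>
     I \<subseteq> A \<and> zero \<in> I \<and>
     (\<forall>a\<in>I. \<forall>b\<in>I. add a b \<in> I) \<and>
     (\<forall>r\<in>A. \<forall>c\<in>I. mul r c \<in> I)"

definition cong_mod :: "'a set \<Rightarrow> ('a \<Rightarrow> 'a \<Rightarrow> 'a) \<Rightarrow> ('a \<Rightarrow> 'a \<Rightarrow> 'a) \<Rightarrow> 'a set \<Rightarrow> 'a \<Rightarrow> 'a \<Rightarrow> bool" where
  "cong_mod A add mul I a b \<longleftrightarrow>
     a \<in> A \<and> b \<in> A \<and>
     (\<exists>c\<in>I. \<exists>d\<in>I. add a c = add b d) \<and>
     (\<forall>c\<in>I. \<forall>r\<in>A. add (mul a c) r \<in> I \<longleftrightarrow> add (mul b c) r \<in> I)"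

definition cong_rel :: "'a set \<Rightarrow> ('a \<Rightarrow> 'a \<Rightarrow> 'a) \<Rightarrow> ('a \<Rightarrow> 'a \<Rightarrow> 'a) \<Rightarrow> 'a set \<Rightarrow> ('a \<times> 'a) set" where
  "cong_rel A add mul I = {(a, b). cong_mod A add mul I a b}"

text \<open>Operation induced on classes: the union of the classes of all x op y with
  x in X and y in Y (equals the class of x op y when the relation is compatible).\<close>
definition class_op :: "('a \<times> 'a) set \<Rightarrow> ('a \<Rightarrow> 'a \<Rightarrow> 'a) \<Rightarrow> 'a set \<Rightarrow> 'a set \<Rightarrow> 'a set" where
  "class_op R f X Y = (\<Union>x\<in>X. \<Union>y\<in>Y. R `` {f x y})"

end

theory Submission
  imports Defs
begin

locale cqr =
  fixes A :: "'a set" and add mul :: "'a \<Rightarrow> 'a \<Rightarrow> 'a" and zero one :: 'a and I :: "'a set"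
  assumes CQ: "comm_quasi_ring A add mul zero one"
    and ID: "qr_ideal A add mul zero I"
begin

lemma S: "semiring A add mul zero one" using CQ by (simp add: comm_quasi_ring_def quasi_ring_def)
lemma S': "(\<forall>a\<in>A. \<forall>b\<in>A. mul a b = mul b a)" using CQ by (simp add: comm_quasi_ring_def)
lemma qi: "\<exists>y\<in>A. add (add one y) one = one \<and> add (add y one) y = y"
  using CQ by (simp add: comm_quasi_ring_def quasi_ring_def)
lemma zA: "zero \<in> A" using S[unfolded semiring_def, THEN conjunct1] by blast
lemma oA: "one \<in> A" using S[unfolded semiring_def, THEN conjunct2, THEN conjunct1] by blast
lemma addA: "\<And>a b. a \<in> A \<Longrightarrow> b \<in> A \<Longrightarrow> add a b \<in> A" using S[unfolded semiring_def, THEN conjunct2, THEN conjunct2, THEN conjunct1] by blast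
lemma mulA: "\<And>a b. a \<in> A \<Longrightarrow> b \<in> A \<Longrightarrow> mul a b \<in> A" using S[unfolded semiring_def, THEN conjunct2, THEN conjunct2, THEN conjunct2, THEN conjunct1] by blast
lemma aassoc: "\<And>a b c. a \<in> A \<Longrightarrow> b \<in> A \<Longrightarrow> c \<in> A \<Longrightarrow> add (add a b) c = add a (add b c)" using S[unfolded semiring_def, THEN conjunct2, THEN conjunct2, THEN conjunct2, THEN conjunct2, THEN conjunct1] by blast
lemma acomm: "\<And>a b. a \<in> A \<Longrightarrow> b \<in> A \<Longrightarrow> add a b = add b a" using S[unfolded semiring_def, THEN conjunct2, THEN conjunct2, THEN conjunct2, THEN conjunct2, THEN conjunct2, THEN conjunct1] by blast
lemma azero: "\<And>a. a \<in> A \<Longrightarrow> add zero a = a" using S[unfolded semiring_def, THEN conjunct2, THEN conjunct2, THEN conjunct2, THEN conjunct2, THEN conjunct2, THEN conjunct2, THEN conjunct1] by blast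
lemma massoc: "\<And>a b c. a \<in> A \<Longrightarrow> b \<in> A \<Longrightarrow> c \<in> A \<Longrightarrow> mul (mul a b) c = mul a (mul b c)" using S[unfolded semiring_def, THEN conjunct2, THEN conjunct2, THEN conjunct2, THEN conjunct2, THEN conjunct2, THEN conjunct2, THEN conjunct2, THEN conjunct1] by blast
lemma mone: "\<And>a. a \<in> A \<Longrightarrow> mul one a = a" using S[unfolded semiring_def, THEN conjunct2, THEN conjunct2, THEN conjunct2, THEN conjunct2, THEN conjunct2, THEN conjunct2, THEN conjunct2, THEN conjunct2, THEN conjunct1] by blast
lemma mone2: "\<And>a. a \<in> A \<Longrightarrow> mul a one = a" using S[unfolded semiring_def, THEN conjunct2, THEN conjunct2, THEN conjunct2, THEN conjunct2, THEN conjunct2, THEN conjunct2, THEN conjunct2, THEN conjunct2, THEN conjunct1] by blast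
lemma dl: "\<And>a b c. a \<in> A \<Longrightarrow> b \<in> A \<Longrightarrow> c \<in> A \<Longrightarrow> mul a (add b c) = add (mul a b) (mul a c)" using S[unfolded semiring_def, THEN conjunct2, THEN conjunct2, THEN conjunct2, THEN conjunct2, THEN conjunct2, THEN conjunct2, THEN conjunct2, THEN conjunct2, THEN conjunct2, THEN conjunct1] by blast
lemma dr: "\<And>a b c. a \<in> A \<Longrightarrow> b \<in> A \<Longrightarrow> c \<in> A \<Longrightarrow> mul (add a b) c = add (mul a c) (mul b c)" using S[unfolded semiring_def, THEN conjunct2, THEN conjunct2, THEN conjunct2, THEN conjunct2, THEN conjunct2, THEN conjunct2, THEN conjunct2, THEN conjunct2, THEN conjunct2, THEN conjunct2, THEN conjunct1] by blast
lemma mz: "\<And>a. a \<in> A \<Longrightarrow> mul zero a = zero" using S[unfolded semiring_def, THEN conjunct2, THEN conjunct2, THEN conjunct2, THEN conjunct2, THEN conjunct2, THEN conjunct2, THEN conjunct2, THEN conjunct2, THEN conjunct2, THEN conjunct2, THEN conjunct2] by blast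
lemma mz2: "\<And>a. a \<in> A \<Longrightarrow> mul a zero = zero" using S[unfolded semiring_def, THEN conjunct2, THEN conjunct2, THEN conjunct2, THEN conjunct2, THEN conjunct2, THEN conjunct2, THEN conjunct2, THEN conjunct2, THEN conjunct2, THEN conjunct2, THEN conjunct2] by blast
lemma mcomm: "\<And>a b. a \<in> A \<Longrightarrow> b \<in> A \<Longrightarrow> mul a b = mul b a" using S' by blast

lemma IA: "I \<subseteq> A" and zI: "zero \<in> I" and addI: "\<And>a b. a \<in> I \<Longrightarrow> b \<in> I \<Longrightarrow> add a b \<in> I"
  and mulI: "\<And>r c. r \<in> A \<Longrightarrow> c \<in> I \<Longrightarrow> mul r c \<in> I"
  using ID unfolding qr_ideal_def by auto

lemma IA': "c \<in> I \<Longrightarrow> c \<in> A" using IA by auto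

lemma lcomm: "a \<in> A \<Longrightarrow> b \<in> A \<Longrightarrow> c \<in> A \<Longrightarrow> add a (add b c) = add b (add a c)"
proof -
  assume h: "a \<in> A" "b \<in> A" "c \<in> A"
  have "add a (add b c) = add (add a b) c" using aassoc h by simp
  also have "\<dots> = add (add b a) c" using acomm h by simp
  also have "\<dots> = add b (add a c)" using aassoc h by simp
  finally show ?thesis .
qed

lemma rswap: "a \<in> A \<Longrightarrow> b \<in> A \<Longrightarrow> c \<in> A \<Longrightarrow> add (add a b) c = add (add a c) b"
  using aassoc acomm by simp

lemma ac4: "a \<in> A \<Longrightarrow> b \<in> A \<Longrightarrow> c \<in> A \<Longrightarrow> d \<in> A \<Longrightarrow> add (add a b) (add c d) = add (add a c) (add b d)"
proof -
  assume h: "a \<in> A" "b \<in> A" "c \<in> A" "d \<in> A"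
  have "add (add a b) (add c d) = add a (add b (add c d))" using aassoc h addA by simp
  also have "\<dots> = add a (add c (add b d))" using lcomm h by simp
  also have "\<dots> = add (add a c) (add b d)" using aassoc h addA by simp
  finally show ?thesis .
qed

lemma mlcomm: "a \<in> A \<Longrightarrow> b \<in> A \<Longrightarrow> c \<in> A \<Longrightarrow> mul a (mul b c) = mul b (mul a c)"
proof -
  assume h: "a \<in> A" "b \<in> A" "c \<in> A"
  have "mul a (mul b c) = mul (mul a b) c" using massoc h by simp
  also have "\<dots> = mul (mul b a) c" using mcomm h by simp
  also have "\<dots> = mul b (mul a c)" using massoc h by simp
  finally show ?thesis .
qed

abbreviation "R \<equiv> cong_rel A add mul I"

lemma equivR: "equiv A R"
proof (rule equivI)
  show "R \<subseteq> A \<times> A" unfolding cong_rel_def cong_mod_def by auto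
  show "refl_on A R"
    unfolding refl_on_def cong_rel_def cong_mod_def using zI by auto
  show "sym R"
  proof (rule symI)
    fix a b assume "(a, b) \<in> R"
    then have h: "cong_mod A add mul I a b" unfolding cong_rel_def by simp
    then obtain c d where "c \<in> I" "d \<in> I" "add a c = add b d" unfolding cong_mod_def by blast
    then have "\<exists>c\<in>I. \<exists>d\<in>I. add b c = add a d" by metis
    then have "cong_mod A add mul I b a" using h unfolding cong_mod_def by simp
    then show "(b, a) \<in> R" unfolding cong_rel_def by simp
  qed
  show "trans R"
  proof (rule transI)
    fix a b e assume 1: "(a, b) \<in> R" and 2: "(b, e) \<in> R"
    from 1 obtain c d where cd: "c \<in> I" "d \<in> I" "add a c = add b d" and a: "a \<in> A" "b \<in> A"
      unfolding cong_rel_def cong_mod_def by auto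
    from 2 obtain c' d' where cd': "c' \<in> I" "d' \<in> I" "add b c' = add e d'" and e: "e \<in> A"
      unfolding cong_rel_def cong_mod_def by auto
    have "add a (add c c') = add (add a c) c'" using aassoc[of a c c'] a cd cd' IA' by simp
    also have "\<dots> = add (add b d) c'" using cd by simp
    also have "\<dots> = add (add b c') d" using rswap a cd cd' IA' by simp
    also have "\<dots> = add (add e d') d" using cd' by simp
    also have "\<dots> = add e (add d' d)" using aassoc e cd cd' IA' by auto
    finally have "add a (add c c') = add e (add d' d)" .
    moreover have "add c c' \<in> I" "add d' d \<in> I" using addI cd cd' by auto
    ultimately show "(a, e) \<in> R" using 1 2 a e unfolding cong_rel_def cong_mod_def by blast
  qed
qed

lemma cong_add:
  assumes "cong_mod A add mul I a a'" "cong_mod A add mul I b b'"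
  shows "cong_mod A add mul I (add a b) (add a' b')"
proof -
  from assms obtain c d c2 d2 where a: "a \<in> A" "a' \<in> A" "b \<in> A" "b' \<in> A"
    and cd: "c \<in> I" "d \<in> I" "c2 \<in> I" "d2 \<in> I" "add a c = add a' d" "add b c2 = add b' d2"
    and h1: "\<forall>c\<in>I. \<forall>r\<in>A. add (mul a c) r \<in> I \<longleftrightarrow> add (mul a' c) r \<in> I"
    and h2: "\<forall>c\<in>I. \<forall>r\<in>A. add (mul b c) r \<in> I \<longleftrightarrow> add (mul b' c) r \<in> I"
    unfolding cong_mod_def by blast
  have cA: "c \<in> A" "d \<in> A" "c2 \<in> A" "d2 \<in> A" using cd IA' by auto
  have "add (add a b) (add c c2) = add (add a c) (add b c2)"
    using ac4 a cA by simp
  also have "\<dots> = add (add a' d) (add b' d2)" using cd by simp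
  also have "\<dots> = add (add a' b') (add d d2)"
    using ac4 a cA by simp
  finally have e1: "add (add a b) (add c c2) = add (add a' b') (add d d2)" .
  have e2: "add (mul (add a b) x) r \<in> I \<longleftrightarrow> add (mul (add a' b') x) r \<in> I" if x: "x \<in> I" and r: "r \<in> A" for x r
  proof -
    have xA: "x \<in> A" using x IA' by auto
    have m: "mul a x \<in> A" "mul a' x \<in> A" "mul b x \<in> A" "mul b' x \<in> A" using mulA a xA by auto
    have "add (mul (add a b) x) r = add (mul a x) (add (mul b x) r)"
      using dr aassoc a xA m r by simp
    moreover have "add (mul (add a' b') x) r = add (mul b' x) (add (mul a' x) r)"
      using dr lcomm aassoc a xA m r by simp
    moreover have "add (mul a x) (add (mul b x) r) \<in> I \<longleftrightarrow> add (mul a' x) (add (mul b x) r) \<in> I"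
      using h1 x m r addA by auto
    moreover have "add (mul a' x) (add (mul b x) r) = add (mul b x) (add (mul a' x) r)"
      using lcomm m r by simp
    moreover have "add (mul b x) (add (mul a' x) r) \<in> I \<longleftrightarrow> add (mul b' x) (add (mul a' x) r) \<in> I"
      using h2 x m r addA by auto
    ultimately show ?thesis by simp
  qed
  show ?thesis unfolding cong_mod_def
    using e1 e2 a addA addI cd by blast
qed

lemma cong_mul:
  assumes "cong_mod A add mul I a a'" "cong_mod A add mul I b b'"
  shows "cong_mod A add mul I (mul a b) (mul a' b')"
proof -
  from assms obtain c d c2 d2 where a: "a \<in> A" "a' \<in> A" "b \<in> A" "b' \<in> A"
    and cd: "c \<in> I" "d \<in> I" "c2 \<in> I" "d2 \<in> I" "add a c = add a' d" "add b c2 = add b' d2"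
    and h1: "\<forall>c\<in>I. \<forall>r\<in>A. add (mul a c) r \<in> I \<longleftrightarrow> add (mul a' c) r \<in> I"
    and h2: "\<forall>c\<in>I. \<forall>r\<in>A. add (mul b c) r \<in> I \<longleftrightarrow> add (mul b' c) r \<in> I"
    unfolding cong_mod_def by blast
  have cA: "c \<in> A" "d \<in> A" "c2 \<in> A" "d2 \<in> A" using cd IA' by auto
  have m: "mul a b \<in> A" "mul a c2 \<in> A" "mul c b' \<in> A" "mul a b' \<in> A" "mul a d2 \<in> A"
     "mul a' b' \<in> A" "mul d b' \<in> A" using mulA a cA by auto
  have "add (mul a b) (add (mul a c2) (mul c b')) = add (mul a (add b c2)) (mul c b')"
    using dl aassoc a cA m by simp
  also have "\<dots> = add (mul a (add b' d2)) (mul c b')" using cd by simp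
  also have "\<dots> = add (mul a d2) (mul (add a c) b')"
    using dl dr aassoc a cA m lcomm[of "mul a b'" "mul a d2" "mul c b'"] by simp
  also have "\<dots> = add (mul a d2) (mul (add a' d) b')" using cd by simp
  also have "\<dots> = add (mul a' b') (add (mul d b') (mul a d2))"
    using dr a cA m lcomm[of "mul a d2" "mul a' b'" "mul d b'"] acomm[of "mul a d2" "mul d b'"] by simp
  finally have e1: "add (mul a b) (add (mul a c2) (mul c b')) = add (mul a' b') (add (mul d b') (mul a d2))" .
  have i1: "add (mul a c2) (mul c b') \<in> I" "add (mul d b') (mul a d2) \<in> I"
    using mulI mcomm[of c b'] mcomm[of d b'] addI a cA cd by auto
  have e2: "add (mul (mul a b) x) r \<in> I \<longleftrightarrow> add (mul (mul a' b') x) r \<in> I" if x: "x \<in> I" and r: "r \<in> A" for x r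
  proof -
    have xA: "x \<in> A" using x IA' by auto
    have bx: "mul b x \<in> I" "mul a' x \<in> I" using mulI a x by auto
    have "mul (mul a b) x = mul a (mul b x)" using massoc a xA by auto
    moreover have "add (mul a (mul b x)) r \<in> I \<longleftrightarrow> add (mul a' (mul b x)) r \<in> I" using h1 bx r by auto
    moreover have "mul a' (mul b x) = mul b (mul a' x)" using mlcomm a xA by simp
    moreover have "add (mul b (mul a' x)) r \<in> I \<longleftrightarrow> add (mul b' (mul a' x)) r \<in> I" using h2 bx r by auto
    moreover have "mul b' (mul a' x) = mul (mul a' b') x" using massoc mlcomm a xA by simp
    ultimately show ?thesis by simp
  qed
  show ?thesis unfolding cong_mod_def
    using e1 e2 a mulA i1 by blast
qed

lemma class_op_eq:
  assumes f: "\<And>a a' b b'. cong_mod A add mul I a a' \<Longrightarrow> cong_mod A add mul I b b' \<Longrightarrow>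
          cong_mod A add mul I (f a b) (f a' b')"
    and x: "x \<in> A" and y: "y \<in> A"
  shows "class_op R f (R `` {x}) (R `` {y}) = R `` {f x y}"
proof
  have "(x,x) \<in> R" "(y,y) \<in> R" using equivR x y by (auto simp: equiv_def refl_on_def)
  then show "R `` {f x y} \<subseteq> class_op R f (R `` {x}) (R `` {y})"
    unfolding class_op_def by blast
  show "class_op R f (R `` {x}) (R `` {y}) \<subseteq> R `` {f x y}"
  proof
    fix z assume "z \<in> class_op R f (R `` {x}) (R `` {y})"
    then obtain x' y' where "(x,x') \<in> R" "(y,y') \<in> R" "(f x' y', z) \<in> R"
      unfolding class_op_def by blast
    then have "(f x y, f x' y') \<in> R" "(f x' y', z) \<in> R" using f unfolding cong_rel_def by auto
    then show "z \<in> R `` {f x y}" using equivR unfolding equiv_def trans_def by blast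
  qed
qed

lemma cadd: "x \<in> A \<Longrightarrow> y \<in> A \<Longrightarrow> class_op R add (R `` {x}) (R `` {y}) = R `` {add x y}"
  by (rule class_op_eq[OF cong_add])
lemma cmul: "x \<in> A \<Longrightarrow> y \<in> A \<Longrightarrow> class_op R mul (R `` {x}) (R `` {y}) = R `` {mul x y}"
  by (rule class_op_eq[OF cong_mul])

lemma quot: "quasi_ring (A // R) (class_op R add) (class_op R mul) (R `` {zero}) (R `` {one})"
proof -
  have Q: "\<And>X P. X \<in> A // R \<Longrightarrow> (\<And>x. x \<in> A \<Longrightarrow> P (R``{x})) \<Longrightarrow> P X"
    by (elim quotientE) auto
  have qI: "\<And>x. x \<in> A \<Longrightarrow> R``{x} \<in> A // R" by (rule quotientI)
  obtain y where y: "y \<in> A" "add (add one y) one = one" "add (add y one) y = y" using qi by blast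
  show ?thesis
    unfolding quasi_ring_def semiring_def
  proof (intro conjI)
    show "R``{zero} \<in> A // R" "R``{one} \<in> A // R" using qI zA oA by auto
    show "\<forall>a\<in>A // R. \<forall>b\<in>A // R. class_op R add a b \<in> A // R"
      by (intro ballI, erule Q, erule Q, simp add: cadd addA qI)
    show "\<forall>a\<in>A // R. \<forall>b\<in>A // R. class_op R mul a b \<in> A // R"
      by (intro ballI, erule Q, erule Q, simp add: cmul mulA qI)
    show "\<forall>a\<in>A // R. \<forall>b\<in>A // R. \<forall>c\<in>A // R. class_op R add (class_op R add a b) c = class_op R add a (class_op R add b c)"
      by (intro ballI, erule Q, erule Q, erule Q, simp add: cadd addA aassoc)
    show "\<forall>a\<in>A // R. \<forall>b\<in>A // R. class_op R add a b = class_op R add b a"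
      by (intro ballI, erule Q, erule Q, simp add: cadd acomm[of _ _])
    show "\<forall>a\<in>A // R. class_op R add (R``{zero}) a = a"
      by (intro ballI, erule Q, simp add: cadd zA azero)
    show "\<forall>a\<in>A // R. \<forall>b\<in>A // R. \<forall>c\<in>A // R. class_op R mul (class_op R mul a b) c = class_op R mul a (class_op R mul b c)"
      by (intro ballI, erule Q, erule Q, erule Q, simp add: cmul mulA massoc)
    show "\<forall>a\<in>A // R. class_op R mul (R``{one}) a = a \<and> class_op R mul a (R``{one}) = a"
      by (intro ballI, erule Q, simp add: cmul oA mone mone2)
    show "\<forall>a\<in>A // R. \<forall>b\<in>A // R. \<forall>c\<in>A // R. class_op R mul a (class_op R add b c) = class_op R add (class_op R mul a b) (class_op R mul a c)"
      by (intro ballI, erule Q, erule Q, erule Q, simp add: cmul cadd addA mulA dl)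
    show "\<forall>a\<in>A // R. \<forall>b\<in>A // R. \<forall>c\<in>A // R. class_op R mul (class_op R add a b) c = class_op R add (class_op R mul a c) (class_op R mul b c)"
      by (intro ballI, erule Q, erule Q, erule Q, simp add: cmul cadd addA mulA dr)
    show "\<forall>a\<in>A // R. class_op R mul (R``{zero}) a = R``{zero} \<and> class_op R mul a (R``{zero}) = R``{zero}"
      by (intro ballI, erule Q, simp add: cmul zA mz mz2)
    show "\<exists>ya\<in>A // R. class_op R add (class_op R add (R``{one}) ya) (R``{one}) = R``{one} \<and>
        class_op R add (class_op R add ya (R``{one})) ya = ya"
      by (rule bexI[of _ "R``{y}"]) (simp_all add: cadd y oA addA qI)
  qed
qed

lemma nontriv: "I \<noteq> A \<Longrightarrow> \<not> cong_mod A add mul I one zero"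
proof
  assume ne: "I \<noteq> A" and h: "cong_mod A add mul I one zero"
  then obtain c d where cd: "c \<in> I" "d \<in> I" "add one c = add zero d"
    and h2: "\<forall>c\<in>I. \<forall>r\<in>A. add (mul one c) r \<in> I \<longleftrightarrow> add (mul zero c) r \<in> I"
    unfolding cong_mod_def by blast
  have "add one c = d" using cd azero IA' by auto
  then have "add c one \<in> I" using cd acomm[of one c] oA IA' by simp
  then have "one \<in> I" using h2 cd(1) oA mone[of c] mz[of c] azero[of one] IA' by auto
  then have "A \<subseteq> I" using mulI[OF _ \<open>one \<in> I\<close>] mone2 by force
  then show False using ne IA by blast
qed

end

theorem proposition2p2:
  fixes A :: "'a set" and add mul :: "'a \<Rightarrow> 'a \<Rightarrow> 'a" and zero one :: 'a and I :: "'a set"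
  assumes "comm_quasi_ring A add mul zero one"
    and "qr_ideal A add mul zero I"
  shows "equiv A (cong_rel A add mul I)
     \<and> (\<forall>a a' b b'. cong_mod A add mul I a a' \<longrightarrow> cong_mod A add mul I b b' \<longrightarrow>
          cong_mod A add mul I (add a b) (add a' b') \<and> cong_mod A add mul I (mul a b) (mul a' b'))
     \<and> quasi_ring (A // cong_rel A add mul I)
          (class_op (cong_rel A add mul I) add) (class_op (cong_rel A add mul I) mul)
          (cong_rel A add mul I `` {zero}) (cong_rel A add mul I `` {one})
     \<and> (I \<noteq> A \<longrightarrow> \<not> cong_mod A add mul I one zero)"
proof -
  interpret cqr A add mul zero one I using assms by unfold_locales
  show ?thesis
    apply (intro conjI allI impI)
    using equivR cong_add cong_mul quot nontriv by simp_all
qed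

end
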